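(* For all sr-expressions $e \in \mathcal{T}$, we have $L_\Sigma(e) = \llbracket e\rrbracket$.
   Context: Fix a finite alphabet $\Sigma$. The set $\mathcal{T}$ of series-rational expressions (sr-expressions) is generated by $e, f ::= 0 \mid 1 \mid \mathtt{a}\in\Sigma \mid e+f \mid e\cdot f \mid e\parallel f \mid e^*$. Their semantics $\llbracket -\rrbracket$ maps each expression to a set of series-parallel pomsets: $\llbracket 0\rrbracket=\emptyset$, $\llbracket 1\rrbracket=\{1\}$ (the empty pomset), $\llbracket \mathtt{a}\rrbracket=\{\mathtt{a}\}$, and $+,\cdot,\parallel,{}^*$ are interpreted as union, pointwise sequential composition, pointwise parallel composition and Kleene closure of pomset languages. $\mathcal{F}\subseteq\mathcal{T}$ is the smallest set with $1\in\mathcal{F}$; $e+f\in\mathcal{F}$ if $e\in\mathcal{F}$ or $f\in\mathcal{F}$; $e\cdot f, e\parallel f\in\mathcal{F}$ if $e,f\in\mathcal{F}$; and $e^*\in\mathcal{F}$ for all $e$. A pomset automaton (PA) is a tuple $\langle Q,F,\delta,\gamma\rangle$ with states $Q$, accepting states $F\subseteq Q$, $\delta: Q\times\Sigma\to 2^Q$ and $\gamma: Q\times\mathbb{M}(Q)\to 2^Q$ (where $\mathbb{M}(Q)$ is the set of finite multisets over $Q$), such that for each $q$ only finitely many $\phi$ have $\gamma(q,\phi)\neq\emptyset$. Its run relation $\rightarrow$ is the smallest relation with: $q\xrightarrow{1} q$; $q\xrightarrow{\mathtt{a}} q'$ if $q'\in\delta(q,\mathtt{a})$; $q\xrightarrow{U\cdot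 V}q'$ if $q\xrightarrow{U}q''\xrightarrow{V}q'$; and $q\xrightarrow{U_1\parallel\cdots\parallel U_n}q'$ if $q'\in\gamma(q,\{\!\{q_1,\dots,q_n\}\!\})$ and $q_i\xrightarrow{U_i}q_i'\in F$ for all $i$. The language of $q$ is $\{U : q\xrightarrow{U} q'\in F\}$. For $e\in\mathcal{T}$ and $T\subseteq\mathcal{T}$, let $e\star T = T$ if $e\in\mathcal{F}$ and $\emptyset$ otherwise, and let $T ; e$ denote the set $\{f\cdot e : f\in T\}$. The derivatives $\delta_\Sigma:\mathcal{T}\times\Sigma\to 2^{\mathcal{T}}$ and $\gamma_\Sigma:\mathcal{T}\times\mathbb{M}(\mathcal{T})\to 2^{\mathcal{T}}$ are defined by: $\delta_\Sigma(0,\mathtt a)=\delta_\Sigma(1,\mathtt a)=\emptyset$; $\delta_\Sigma(\mathtt b,\mathtt a)=\{1 : \mathtt a=\mathtt b\}$; $\delta_\Sigma(e+f,\mathtt a)=\delta_\Sigma(e,\mathtt a)\cup\delta_\Sigma(f,\mathtt a)$; $\delta_\Sigma(e\cdot f,\mathtt a)=\{g\cdot f : g\in\delta_\Sigma(e,\mathtt a)\}\cup e\star\delta_\Sigma(f,\mathtt a)$; $\delta_\Sigma(e\parallel f,\mathtt a)=\emptyset$; $\delta_\Sigma(e^*,\mathtt a)=\{g\cdot e^* : g\in\delta_\Sigma(e,\mathtt a)\}$; and $\gamma_\Sigma(0,\phi)=\gamma_\Sigma(1,\phi)=\gamma_\Sigma(\mathtt b,\phi)=\emptyset$; $\gamma_\Sigma(e+f,\phi)=\gamma_\Sigma(e,\phi)\cup\gamma_\Sigma(f,\phi)$;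 $\gamma_\Sigma(e\cdot f,\phi)=\{g\cdot f: g\in\gamma_\Sigma(e,\phi)\}\cup e\star\gamma_\Sigma(f,\phi)$; $\gamma_\Sigma(e\parallel f,\phi)=\{1 : \phi=\{\!\{e,f\}\!\}\}$; $\gamma_\Sigma(e^*,\phi)=\{g\cdot e^* : g\in\gamma_\Sigma(e,\phi)\}$. The syntactic PA is $A_\Sigma=\langle\mathcal{T},\mathcal{F},\delta_\Sigma,\gamma_\Sigma\rangle$, and $L_\Sigma(e)$ denotes the language of state $e$ in $A_\Sigma$. *)

theory Defs
  imports Main "HOL-Library.Multiset"
begin

text \<open>A pomset is an isomorphism class of finite labelled posets. We work with concrete
labelled posets whose carrier is a finite set of naturals; every pomset language below is
defined isomorphism-invariantly, i.e. it contains every concrete representative of each of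
its pomsets.\<close>

record 'a lp =
  car :: "nat set"
  ord :: "nat \<Rightarrow> nat \<Rightarrow> bool"
  lab :: "nat \<Rightarrow> 'a"

definition wf_lp :: "'a lp \<Rightarrow> bool" where
  "wf_lp U \<longleftrightarrow> finite (car U)
     \<and> (\<forall>x y. ord U x y \<longrightarrow> x \<in> car U \<and> y \<in> car U)
     \<and> (\<forall>x\<in>car U. ord U x x)
     \<and> (\<forall>x y. ord U x y \<and> ord U y x \<longrightarrow> x = y)
     \<and> (\<forall>x y z. ord U x y \<and> ord U y z \<longrightarrow> ord U x z)"

definition iso_lp :: "'a lp \<Rightarrow> 'a lp \<Rightarrow> bool" where
  "iso_lp U V \<longleftrightarrow> (\<exists>f. bij_betw f (car U) (car V)
     \<and> (\<forall>x\<in>car U. lab V (f x) = lab U x)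
     \<and> (\<forall>x\<in>car U. \<forall>y\<in>car U. ord U x y \<longleftrightarrow> ord V (f x) (f y)))"

definition restr_lp :: "'a lp \<Rightarrow> nat set \<Rightarrow> 'a lp" where
  "restr_lp U A = \<lparr>car = A, ord = (\<lambda>x y. ord U x y \<and> x \<in> A \<and> y \<in> A), lab = lab U\<rparr>"

definition is_empty_pom :: "'a lp \<Rightarrow> bool" where
  "is_empty_pom U \<longleftrightarrow> wf_lp U \<and> car U = {}"

definition is_prim_pom :: "'a lp \<Rightarrow> 'a \<Rightarrow> bool" where
  "is_prim_pom U a \<longleftrightarrow> wf_lp U \<and> (\<exists>x. car U = {x} \<and> lab U x = a)"

definition seq_of :: "'a lp \<Rightarrow> 'a lp \<Rightarrow> 'a lp \<Rightarrow> bool" where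
  "seq_of U V W \<longleftrightarrow> wf_lp U \<and> wf_lp V \<and> wf_lp W \<and> (\<exists>A B. A \<union> B = car U \<and> A \<inter> B = {}
     \<and> iso_lp (restr_lp U A) V \<and> iso_lp (restr_lp U B) W
     \<and> (\<forall>x\<in>A. \<forall>y\<in>B. ord U x y))"

definition par_of_list :: "'a lp \<Rightarrow> 'a lp list \<Rightarrow> bool" where
  "par_of_list U Us \<longleftrightarrow> wf_lp U \<and> (\<forall>i<length Us. wf_lp (Us ! i))
     \<and> (\<exists>A :: nat \<Rightarrow> nat set. (\<Union>i<length Us. A i) = car U
        \<and> (\<forall>i<length Us. \<forall>j<length Us. i \<noteq> j \<longrightarrow> A i \<inter> A j = {})
        \<and> (\<forall>i<length Us. iso_lp (restr_lp U (A i)) (Us ! i))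
        \<and> (\<forall>i<length Us. \<forall>j<length Us. i \<noteq> j \<longrightarrow> (\<forall>x\<in>A i. \<forall>y\<in>A j. \<not> ord U x y)))"

definition par_of :: "'a lp \<Rightarrow> 'a lp \<Rightarrow> 'a lp \<Rightarrow> bool" where
  "par_of U V W \<longleftrightarrow> par_of_list U [V, W]"

definition seq_lang :: "'a lp set \<Rightarrow> 'a lp set \<Rightarrow> 'a lp set" where
  "seq_lang X Y = {U. \<exists>V\<in>X. \<exists>W\<in>Y. seq_of U V W}"

definition par_lang :: "'a lp set \<Rightarrow> 'a lp set \<Rightarrow> 'a lp set" where
  "par_lang X Y = {U. \<exists>V\<in>X. \<exists>W\<in>Y. par_of U V W}"

fun lang_pow :: "'a lp set \<Rightarrow> nat \<Rightarrow> 'a lp set" where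
  "lang_pow X 0 = {U. is_empty_pom U}"
| "lang_pow X (Suc n) = seq_lang X (lang_pow X n)"

definition kleene :: "'a lp set \<Rightarrow> 'a lp set" where
  "kleene X = (\<Union>n. lang_pow X n)"

datatype 'a srexp = Zero | One | Sym 'a | Plus "'a srexp" "'a srexp"
  | Seq "'a srexp" "'a srexp" | Par "'a srexp" "'a srexp" | Star "'a srexp"

fun sem :: "'a srexp \<Rightarrow> 'a lp set" where
  "sem Zero = {}"
| "sem One = {U. is_empty_pom U}"
| "sem (Sym a) = {U. is_prim_pom U a}"
| "sem (Plus e f) = sem e \<union> sem f"
| "sem (Seq e f) = seq_lang (sem e) (sem f)"
| "sem (Par e f) = par_lang (sem e) (sem f)"
| "sem (Star e) = kleene (sem e)"

inductive run :: "'q set \<Rightarrow> ('q \<Rightarrow> 'a \<Rightarrow> 'q set) \<Rightarrow> ('q \<Rightarrow> 'q multiset \<Rightarrow> 'q set)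
    \<Rightarrow> 'q \<Rightarrow> 'a lp \<Rightarrow> 'q \<Rightarrow> bool"
  for F \<delta> \<gamma> where
  run_one: "is_empty_pom U \<Longrightarrow> run F \<delta> \<gamma> q U q"
| run_sym: "is_prim_pom U a \<Longrightarrow> q' \<in> \<delta> q a \<Longrightarrow> run F \<delta> \<gamma> q U q'"
| run_seq: "run F \<delta> \<gamma> q V q'' \<Longrightarrow> run F \<delta> \<gamma> q'' W q' \<Longrightarrow> seq_of U V W \<Longrightarrow> run F \<delta> \<gamma> q U q'"
| run_par: "q' \<in> \<gamma> q (mset qs) \<Longrightarrow> length Us = length qs
     \<Longrightarrow> (\<forall>i<length qs. \<exists>r. run F \<delta> \<gamma> (qs ! i) (Us ! i) r \<and> r \<in> F)
     \<Longrightarrow> par_of_list U Us \<Longrightarrow> run F \<delta> \<gamma> q U q'"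

definition pa_lang :: "'q set \<Rightarrow> ('q \<Rightarrow> 'a \<Rightarrow> 'q set) \<Rightarrow> ('q \<Rightarrow> 'q multiset \<Rightarrow> 'q set)
    \<Rightarrow> 'q \<Rightarrow> 'a lp set" where
  "pa_lang F \<delta> \<gamma> q = {U. \<exists>q'. run F \<delta> \<gamma> q U q' \<and> q' \<in> F}"

inductive_set FF :: "'a srexp set" where
  FF_one: "One \<in> FF"
| FF_plus1: "e \<in> FF \<Longrightarrow> Plus e f \<in> FF"
| FF_plus2: "f \<in> FF \<Longrightarrow> Plus e f \<in> FF"
| FF_seq: "e \<in> FF \<Longrightarrow> f \<in> FF \<Longrightarrow> Seq e f \<in> FF"
| FF_par: "e \<in> FF \<Longrightarrow> f \<in> FF \<Longrightarrow> Par e f \<in> FF"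
| FF_star: "Star e \<in> FF"

definition star_op :: "'a srexp \<Rightarrow> 'a srexp set \<Rightarrow> 'a srexp set" where
  "star_op e T = (if e \<in> FF then T else {})"

fun deltaS :: "'a srexp \<Rightarrow> 'a \<Rightarrow> 'a srexp set" where
  "deltaS Zero a = {}"
| "deltaS One a = {}"
| "deltaS (Sym b) a = (if a = b then {One} else {})"
| "deltaS (Plus e f) a = deltaS e a \<union> deltaS f a"
| "deltaS (Seq e f) a = {Seq g f | g. g \<in> deltaS e a} \<union> star_op e (deltaS f a)"
| "deltaS (Par e f) a = {}"
| "deltaS (Star e) a = {Seq g (Star e) | g. g \<in> deltaS e a}"

fun gammaS :: "'a srexp \<Rightarrow> 'a srexp multiset \<Rightarrow> 'a srexp set" where
  "gammaS Zero \<phi> = {}"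
| "gammaS One \<phi> = {}"
| "gammaS (Sym b) \<phi> = {}"
| "gammaS (Plus e f) \<phi> = gammaS e \<phi> \<union> gammaS f \<phi>"
| "gammaS (Seq e f) \<phi> = {Seq g f | g. g \<in> gammaS e \<phi>} \<union> star_op e (gammaS f \<phi>)"
| "gammaS (Par e f) \<phi> = (if \<phi> = {#e, f#} then {One} else {})"
| "gammaS (Star e) \<phi> = {Seq g (Star e) | g. g \<in> gammaS e \<phi>}"

definition LS :: "'a srexp \<Rightarrow> 'a lp set" where
  "LS e = pa_lang FF deltaS gammaS e"

end

theory Submission
  imports Defs
begin



lemma wf_fin: assumes "wf_lp T" shows "finite (car T)"
  using assms[unfolded wf_lp_def, THEN conjunct1] .
lemma wf_in: assumes "wf_lp T" shows "\<forall>x y. ord T x y \<longrightarrow> x \<in> car T \<and> y \<in> car T"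
  using assms[unfolded wf_lp_def, THEN conjunct2, THEN conjunct1] .
lemma wf_refl: assumes "wf_lp T" shows "\<forall>x\<in>car T. ord T x x"
  using assms[unfolded wf_lp_def, THEN conjunct2, THEN conjunct2, THEN conjunct1] .
lemma wf_anti: assumes "wf_lp T" shows "\<forall>x y. ord T x y \<and> ord T y x \<longrightarrow> x = y"
  using assms[unfolded wf_lp_def, THEN conjunct2, THEN conjunct2, THEN conjunct2, THEN conjunct1] .
lemma wf_trans: assumes "wf_lp T" shows "\<forall>x y z. ord T x y \<and> ord T y z \<longrightarrow> ord T x z"
  using assms[unfolded wf_lp_def, THEN conjunct2, THEN conjunct2, THEN conjunct2, THEN conjunct2] .

lemma wf_ord: "wf_lp T \<Longrightarrow> ord T x y \<Longrightarrow> x \<in> car T \<and> y \<in> car T"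
  using wf_in by blast

lemma restr_restr: "S' \<subseteq> S \<Longrightarrow> restr_lp (restr_lp T S) S' = restr_lp T S'"
  unfolding restr_lp_def by (auto simp: fun_eq_iff)

lemma restr_car: "wf_lp T \<Longrightarrow> restr_lp T (car T) = T"
  by (cases T) (auto simp: restr_lp_def fun_eq_iff dest: wf_ord)

lemma wf_restr:
  assumes "wf_lp T" "S \<subseteq> car T" shows "wf_lp (restr_lp T S)"
proof -
  note f = wf_fin[OF assms(1)] and r = wf_refl[OF assms(1)] and a = wf_anti[OF assms(1)]
    and t = wf_trans[OF assms(1)]
  have "finite S" using finite_subset[OF assms(2) f] .
  moreover have "\<forall>x\<in>S. ord T x x \<and> x \<in> S \<and> x \<in> S" using r assms(2) by blast
  moreover have "\<forall>x y. (ord T x y \<and> x \<in> S \<and> y \<in> S) \<and> (ord T y x \<and> y \<in> S \<and> x \<in> S) \<longrightarrow> x = y"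
    using a by blast
  moreover have "\<forall>x y z. (ord T x y \<and> x \<in> S \<and> y \<in> S) \<and> (ord T y z \<and> y \<in> S \<and> z \<in> S) \<longrightarrow> (ord T x z \<and> x \<in> S \<and> z \<in> S)"
  proof (intro allI impI)
    fix x y z assume h: "(ord T x y \<and> x \<in> S \<and> y \<in> S) \<and> (ord T y z \<and> y \<in> S \<and> z \<in> S)"
    have "ord T x z" using t h by blast
    then show "ord T x z \<and> x \<in> S \<and> z \<in> S" using h by blast
  qed
  moreover have "\<forall>x y. (ord T x y \<and> x \<in> S \<and> y \<in> S) \<longrightarrow> x \<in> S \<and> y \<in> S" by blast
  ultimately show ?thesis unfolding wf_lp_def restr_lp_def lp.simps by blast
qed

lemma iso_trans: "iso_lp U V \<Longrightarrow> iso_lp V W \<Longrightarrow> iso_lp U W"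
  unfolding iso_lp_def
proof (elim exE conjE)
  fix f g
  assume f: "bij_betw f (car U) (car V)" "\<forall>x\<in>car U. lab V (f x) = lab U x"
    "\<forall>x\<in>car U. \<forall>y\<in>car U. ord U x y = ord V (f x) (f y)"
  and g: "bij_betw g (car V) (car W)" "\<forall>x\<in>car V. lab W (g x) = lab V x"
    "\<forall>x\<in>car V. \<forall>y\<in>car V. ord V x y = ord W (g x) (g y)"
  have m: "\<And>x. x \<in> car U \<Longrightarrow> f x \<in> car V" using f(1) bij_betwE by blast
  show "\<exists>h. bij_betw h (car U) (car W) \<and> (\<forall>x\<in>car U. lab W (h x) = lab U x)
     \<and> (\<forall>x\<in>car U. \<forall>y\<in>car U. ord U x y = ord W (h x) (h y))"
  proof (intro exI conjI ballI)
    show "bij_betw (g \<circ> f) (car U) (car W)" using f(1) g(1) by (rule bij_betw_trans)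
    fix x assume x: "x \<in> car U"
    show "lab W ((g \<circ> f) x) = lab U x" using f(2) g(2) m[OF x] x by simp
    fix y assume y: "y \<in> car U"
    show "ord U x y = ord W ((g \<circ> f) x) ((g \<circ> f) y)" using f(3) g(3) m[OF x] m[OF y] x y by simp
  qed
qed


lemma iso_restr:
  assumes "bij_betw f (car T) (car X)" "\<forall>x\<in>car T. lab X (f x) = lab T x"
    "\<forall>x\<in>car T. \<forall>y\<in>car T. ord T x y \<longleftrightarrow> ord X (f x) (f y)" "A \<subseteq> car X"
  shows "iso_lp (restr_lp T (car T \<inter> f -` A)) (restr_lp X A)"
proof -
  have img: "f ` (car T \<inter> f -` A) = A"
  proof
    show "A \<subseteq> f ` (car T \<inter> f -` A)"
    proof
      fix x assume "x \<in> A"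
      then have "x \<in> f ` car T" using assms(1,4) unfolding bij_betw_def by auto
      then obtain y where "y \<in> car T" "x = f y" by auto
      then show "x \<in> f ` (car T \<inter> f -` A)" using \<open>x \<in> A\<close> by auto
    qed
  qed auto
  have "bij_betw f (car T \<inter> f -` A) A" by (rule bij_betw_subset[OF assms(1) Int_lower1 img])
  moreover have "\<forall>x\<in>car T \<inter> f -` A. lab X (f x) = lab T x" using assms(2) by blast
  moreover have "\<forall>x\<in>car T \<inter> f -` A. \<forall>y\<in>car T \<inter> f -` A. (ord T x y \<and> x \<in> car T \<inter> f -` A \<and> y \<in> car T \<inter> f -` A) \<longleftrightarrow> (ord X (f x) (f y) \<and> f x \<in> A \<and> f y \<in> A)"
    using assms(3) by blast
  ultimately show ?thesis unfolding iso_lp_def restr_lp_def lp.simps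
    by (intro exI[of _ f]) simp
qed


lemma car_restr[simp]: "car (restr_lp T S) = S" by (simp add: restr_lp_def)
lemma ord_restr[simp]: "ord (restr_lp T S) x y = (ord T x y \<and> x \<in> S \<and> y \<in> S)" by (simp add: restr_lp_def)
lemma lab_restr[simp]: "lab (restr_lp T S) = lab T" by (simp add: restr_lp_def)

lemma iso_refl: "iso_lp T T"
  unfolding iso_lp_def by (rule exI[of _ id]) auto

lemma iso_empty: "car T = {} \<Longrightarrow> car X = {} \<Longrightarrow> iso_lp T X"
  unfolding iso_lp_def by (rule exI[of _ id]) auto

lemma iso_empty_car: "iso_lp T X \<Longrightarrow> car X = {} \<Longrightarrow> car T = {}"
  unfolding iso_lp_def bij_betw_def by auto

lemma isoE:
  assumes "iso_lp T X"
  obtains f where "bij_betw f (car T) (car X)" "\<forall>x\<in>car T. lab X (f x) = lab T x"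
    "\<forall>x\<in>car T. \<forall>y\<in>car T. ord T x y \<longleftrightarrow> ord X (f x) (f y)"
  using assms unfolding iso_lp_def by blast

lemma seq_ofI:
  assumes "wf_lp U" "wf_lp V" "wf_lp W" "A \<union> B = car U" "A \<inter> B = {}"
    "iso_lp (restr_lp U A) V" "iso_lp (restr_lp U B) W" "\<forall>x\<in>A. \<forall>y\<in>B. ord U x y"
  shows "seq_of U V W"
  unfolding seq_of_def using assms by blast

lemma seq_ofE:
  assumes "seq_of U V W"
  obtains A B where "wf_lp U" "wf_lp V" "wf_lp W" "A \<union> B = car U" "A \<inter> B = {}"
    "iso_lp (restr_lp U A) V" "iso_lp (restr_lp U B) W" "\<forall>x\<in>A. \<forall>y\<in>B. ord U x y"
  using assms unfolding seq_of_def by blast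

lemma seq_of_iso:
  assumes "wf_lp T" "iso_lp T X" "seq_of X V W"
  shows "seq_of T V W"
proof -
  obtain f where f: "bij_betw f (car T) (car X)" "\<forall>x\<in>car T. lab X (f x) = lab T x"
    "\<forall>x\<in>car T. \<forall>y\<in>car T. ord T x y \<longleftrightarrow> ord X (f x) (f y)" using isoE[OF assms(2)] by blast
  obtain A B where AB: "wf_lp V" "wf_lp W" "A \<union> B = car X" "A \<inter> B = {}"
    "iso_lp (restr_lp X A) V" "iso_lp (restr_lp X B) W" "\<forall>x\<in>A. \<forall>y\<in>B. ord X x y"
    using seq_ofE[OF assms(3)] by metis
  have fx: "\<And>x. x \<in> car T \<Longrightarrow> f x \<in> car X" using f(1) bij_betwE by blast
  show ?thesis
  proof (rule seq_ofI[of T V W "car T \<inter> f -` A" "car T \<inter> f -` B"])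
    show "(car T \<inter> f -` A) \<union> (car T \<inter> f -` B) = car T" using fx AB(3) by blast
    show "(car T \<inter> f -` A) \<inter> (car T \<inter> f -` B) = {}" using AB(4) by blast
    show "iso_lp (restr_lp T (car T \<inter> f -` A)) V"
      using iso_trans[OF iso_restr[OF f, of A] AB(5)] AB(3) by blast
    show "iso_lp (restr_lp T (car T \<inter> f -` B)) W"
      using iso_trans[OF iso_restr[OF f, of B] AB(6)] AB(3) by blast
    show "\<forall>x\<in>car T \<inter> f -` A. \<forall>y\<in>car T \<inter> f -` B. ord T x y"
      using f(3) AB(7) by blast
  qed (use assms(1) AB(1,2) in auto)
qed





lemma par_of_listI:
  assumes "wf_lp U" "\<forall>i<length Us. wf_lp (Us ! i)" "(\<Union>i<length Us. A i) = car U"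
    "\<forall>i<length Us. \<forall>j<length Us. i \<noteq> j \<longrightarrow> A i \<inter> A j = {}"
    "\<forall>i<length Us. iso_lp (restr_lp U (A i)) (Us ! i)"
    "\<forall>i<length Us. \<forall>j<length Us. i \<noteq> j \<longrightarrow> (\<forall>x\<in>A i. \<forall>y\<in>A j. \<not> ord U x y)"
  shows "par_of_list U Us"
  unfolding par_of_list_def by (intro conjI exI[of _ A] assms)

lemma par_of_listE:
  assumes "par_of_list U Us"
    and "\<And>A. wf_lp U \<Longrightarrow> \<forall>i<length Us. wf_lp (Us ! i) \<Longrightarrow> (\<Union>i<length Us. A i) = car U \<Longrightarrow>
    \<forall>i<length Us. \<forall>j<length Us. i \<noteq> j \<longrightarrow> A i \<inter> A j = {} \<Longrightarrow>
    \<forall>i<length Us. iso_lp (restr_lp U (A i)) (Us ! i) \<Longrightarrow>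
    \<forall>i<length Us. \<forall>j<length Us. i \<noteq> j \<longrightarrow> (\<forall>x\<in>A i. \<forall>y\<in>A j. \<not> ord U x y) \<Longrightarrow> P"
  shows P
  using assms(1) unfolding par_of_list_def
  apply (elim conjE exE)
  apply (rule assms(2))
  apply assumption+
  done

lemma par_of_list_iso:
  assumes "wf_lp T" "iso_lp T X" "par_of_list X Us"
  shows "par_of_list T Us"
proof -
  obtain f where f: "bij_betw f (car T) (car X)" "\<forall>x\<in>car T. lab X (f x) = lab T x"
    "\<forall>x\<in>car T. \<forall>y\<in>car T. ord T x y \<longleftrightarrow> ord X (f x) (f y)" by (rule isoE[OF assms(2)])
  obtain A where A: "\<forall>i<length Us. wf_lp (Us ! i)" "(\<Union>i<length Us. A i) = car X"
    "\<forall>i<length Us. \<forall>j<length Us. i \<noteq> j \<longrightarrow> A i \<inter> A j = {}"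
    "\<forall>i<length Us. iso_lp (restr_lp X (A i)) (Us ! i)"
    "\<forall>i<length Us. \<forall>j<length Us. i \<noteq> j \<longrightarrow> (\<forall>x\<in>A i. \<forall>y\<in>A j. \<not> ord X x y)"
    by (rule par_of_listE[OF assms(3)], assumption+)
  have fx: "\<And>x. x \<in> car T \<Longrightarrow> f x \<in> car X" using f(1) bij_betwE by blast
  show ?thesis
  proof (rule par_of_listI[of T Us "\<lambda>i. car T \<inter> f -` A i"])
    show "(\<Union>i<length Us. car T \<inter> f -` A i) = car T"
    proof
      show "car T \<subseteq> (\<Union>i<length Us. car T \<inter> f -` A i)"
      proof
        fix x assume "x \<in> car T"
        then have "f x \<in> (\<Union>i<length Us. A i)" using fx A(2) by blast
        then show "x \<in> (\<Union>i<length Us. car T \<inter> f -` A i)" using \<open>x \<in> car T\<close> by blast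
      qed
    qed blast
    show "\<forall>i<length Us. \<forall>j<length Us. i \<noteq> j \<longrightarrow> (car T \<inter> f -` A i) \<inter> (car T \<inter> f -` A j) = {}"
      using A(3) by blast
    show "\<forall>i<length Us. iso_lp (restr_lp T (car T \<inter> f -` A i)) (Us ! i)"
    proof (intro allI impI)
      fix i assume i: "i < length Us"
      have "A i \<subseteq> car X" using A(2) i by blast
      then show "iso_lp (restr_lp T (car T \<inter> f -` A i)) (Us ! i)"
        using iso_trans[OF iso_restr[OF f, of "A i"]] A(4) i by blast
    qed
    show "\<forall>i<length Us. \<forall>j<length Us. i \<noteq> j \<longrightarrow> (\<forall>x\<in>car T \<inter> f -` A i. \<forall>y\<in>car T \<inter> f -` A j. \<not> ord T x y)"
    proof (intro allI impI ballI)
      fix i j x y assume ij: "i < length Us" "j < length Us" "i \<noteq> j"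
        and x: "x \<in> car T \<inter> f -` A i" and y: "y \<in> car T \<inter> f -` A j"
      have "ord T x y = ord X (f x) (f y)" using f(3) x y by simp
      moreover have "\<not> ord X (f x) (f y)" using A(5) ij x y by simp
      ultimately show "\<not> ord T x y" by simp
    qed
  qed (use assms(1) A(1) in auto)
qed



lemma seq_unitR:
  assumes "seq_of T U E" "is_empty_pom E" shows "iso_lp T U"
proof -
  obtain A B where AB: "wf_lp T" "A \<union> B = car T" "iso_lp (restr_lp T A) U" "iso_lp (restr_lp T B) E"
    using seq_ofE[OF assms(1)] by metis
  have "B = {}" using iso_empty_car[OF AB(4)] assms(2) unfolding is_empty_pom_def by simp
  then have "A = car T" using AB(2) by simp
  then show ?thesis using AB(3) restr_car[OF AB(1)] by simp
qed

lemma seq_unitL: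
  assumes "seq_of T E U" "is_empty_pom E" shows "iso_lp T U"
proof -
  obtain A B where AB: "wf_lp T" "A \<union> B = car T" "iso_lp (restr_lp T A) E" "iso_lp (restr_lp T B) U"
    using seq_ofE[OF assms(1)] by metis
  have "A = {}" using iso_empty_car[OF AB(3)] assms(2) unfolding is_empty_pom_def by simp
  then have "B = car T" using AB(2) by simp
  then show ?thesis using AB(4) restr_car[OF AB(1)] by simp
qed

lemma seq_intro_unitR:
  assumes "wf_lp V" "is_empty_pom E" shows "seq_of V V E"
proof (rule seq_ofI[of V V E "car V" "{}"])
  show "iso_lp (restr_lp V (car V)) V" using restr_car[OF assms(1)] iso_refl by simp
  show "iso_lp (restr_lp V {}) E" using assms(2) unfolding is_empty_pom_def by (simp add: iso_empty)
qed (use assms in \<open>auto simp: is_empty_pom_def\<close>)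

lemma seq_intro_unitL:
  assumes "wf_lp V" "is_empty_pom E" shows "seq_of V E V"
proof (rule seq_ofI[of V E V "{}" "car V"])
  show "iso_lp (restr_lp V (car V)) V" using restr_car[OF assms(1)] iso_refl by simp
  show "iso_lp (restr_lp V {}) E" using assms(2) unfolding is_empty_pom_def by (simp add: iso_empty)
qed (use assms in \<open>auto simp: is_empty_pom_def\<close>)



lemma empty_iso:
  assumes "wf_lp T" "iso_lp T X" "is_empty_pom X" shows "is_empty_pom T"
proof -
  have "car X = {}" using assms(3) unfolding is_empty_pom_def by (rule conjunct2)
  then have "car T = {}" using iso_empty_car[OF assms(2)] by simp
  then show ?thesis unfolding is_empty_pom_def using assms(1) by (rule conjI[rotated])
qed


lemma prim_iso:
  assumes "wf_lp T" "iso_lp T X" "is_prim_pom X a" shows "is_prim_pom T a"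
proof -
  obtain f where f: "bij_betw f (car T) (car X)" "\<forall>x\<in>car T. lab X (f x) = lab T x"
    "\<forall>x\<in>car T. \<forall>y\<in>car T. ord T x y \<longleftrightarrow> ord X (f x) (f y)"
    by (rule isoE[OF assms(2)])
  have "\<exists>x. car X = {x} \<and> lab X x = a" using assms(3) unfolding is_prim_pom_def by (rule conjunct2)
  then obtain x where x: "car X = {x}" "lab X x = a" by blast
  have inj: "inj_on f (car T)" using f(1) unfolding bij_betw_def by (rule conjunct1)
  have img: "f ` car T = {x}" using f(1) x(1) unfolding bij_betw_def by simp
  have "x \<in> f ` car T" using img by simp
  then obtain y where yT: "y \<in> car T" and fy: "f y = x" by (rule imageE) simp
  have "car T = {y}"
  proof
    show "car T \<subseteq> {y}"
    proof
      fix z assume z: "z \<in> car T"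
      then have "f z \<in> {x}" using img by blast
      then have "f z = f y" using fy by simp
      then show "z \<in> {y}" using inj_onD[OF inj _ z yT] by simp
    qed
  qed (use yT in simp)
  note y = this
  have "lab T y = a" using f(2) x(2) yT fy by metis
  then show ?thesis using assms(1) y unfolding is_prim_pom_def by blast
qed



lemma seq_assoc1:
  assumes "seq_of T U Y" "seq_of Y G H"
  shows "\<exists>Z. seq_of Z U G \<and> seq_of T Z H"
proof -
  obtain A B where AB: "wf_lp T" "wf_lp U" "wf_lp Y" "A \<union> B = car T" "A \<inter> B = {}"
    "iso_lp (restr_lp T A) U" "iso_lp (restr_lp T B) Y" "\<forall>x\<in>A. \<forall>y\<in>B. ord T x y"
    by (rule seq_ofE[OF assms(1)])
  obtain C D where CD: "wf_lp Y" "wf_lp G" "wf_lp H" "C \<union> D = car Y" "C \<inter> D = {}"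
    "iso_lp (restr_lp Y C) G" "iso_lp (restr_lp Y D) H" "\<forall>x\<in>C. \<forall>y\<in>D. ord Y x y"
    by (rule seq_ofE[OF assms(2)])
  obtain g where g: "bij_betw g (car (restr_lp T B)) (car Y)"
    "\<forall>x\<in>car (restr_lp T B). lab Y (g x) = lab (restr_lp T B) x"
    "\<forall>x\<in>car (restr_lp T B). \<forall>y\<in>car (restr_lp T B). ord (restr_lp T B) x y \<longleftrightarrow> ord Y (g x) (g y)"
    by (rule isoE[OF AB(7)])
  have gB: "\<And>x. x \<in> B \<Longrightarrow> g x \<in> car Y" using g(1) bij_betwE by fastforce
  define B1 where "B1 = B \<inter> g -` C"
  define B2 where "B2 = B \<inter> g -` D"
  define Z where "Z = restr_lp T (A \<union> B1)"
  have B12: "B1 \<union> B2 = B" unfolding B1_def B2_def using gB CD(4) by blast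
  have B12d: "B1 \<inter> B2 = {}" unfolding B1_def B2_def using CD(5) by blast
  have isoB1: "iso_lp (restr_lp T B1) G"
  proof -
    have "iso_lp (restr_lp (restr_lp T B) (car (restr_lp T B) \<inter> g -` C)) (restr_lp Y C)"
      by (rule iso_restr[OF g]) (use CD(4) in blast)
    then have "iso_lp (restr_lp T B1) (restr_lp Y C)" unfolding B1_def
      by (simp add: restr_restr)
    then show ?thesis using CD(6) by (rule iso_trans)
  qed
  have isoB2: "iso_lp (restr_lp T B2) H"
  proof -
    have "iso_lp (restr_lp (restr_lp T B) (car (restr_lp T B) \<inter> g -` D)) (restr_lp Y D)"
      by (rule iso_restr[OF g]) (use CD(4) in blast)
    then have "iso_lp (restr_lp T B2) (restr_lp Y D)" unfolding B2_def
      by (simp add: restr_restr)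
    then show ?thesis using CD(7) by (rule iso_trans)
  qed
  have sub: "A \<union> B1 \<subseteq> car T" using AB(4) B12 by blast
  have wfZ: "wf_lp Z" unfolding Z_def using wf_restr[OF AB(1) sub] .
  have "seq_of Z U G"
  proof (rule seq_ofI[OF wfZ AB(2) CD(2), of A B1])
    show "A \<union> B1 = car Z" unfolding Z_def by simp
    show "A \<inter> B1 = {}" using AB(5) B12 by blast
    show "iso_lp (restr_lp Z A) U" unfolding Z_def using AB(6) by (simp add: restr_restr)
    show "iso_lp (restr_lp Z B1) G" unfolding Z_def using isoB1 by (simp add: restr_restr)
    show "\<forall>x\<in>A. \<forall>y\<in>B1. ord Z x y" unfolding Z_def using AB(8) B12 by auto
  qed
  moreover have "seq_of T Z H"
  proof (rule seq_ofI[OF AB(1) wfZ CD(3), of "A \<union> B1" B2])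
    show "A \<union> B1 \<union> B2 = car T" using AB(4) B12 by blast
    show "(A \<union> B1) \<inter> B2 = {}" using AB(5) B12 B12d by blast
    show "iso_lp (restr_lp T (A \<union> B1)) Z" unfolding Z_def by (rule iso_refl)
    show "iso_lp (restr_lp T B2) H" by (rule isoB2)
    show "\<forall>x\<in>A \<union> B1. \<forall>y\<in>B2. ord T x y"
    proof (intro ballI)
      fix x y assume x: "x \<in> A \<union> B1" and y: "y \<in> B2"
      show "ord T x y"
      proof (cases "x \<in> A")
        case True
        then show ?thesis using AB(8) y B12 by blast
      next
        case False
        then have xB1: "x \<in> B1" using x by blast
        have "g x \<in> C" "g y \<in> D" using xB1 y unfolding B1_def B2_def by auto
        then have "ord Y (g x) (g y)" using CD(8) by blast
        moreover have "x \<in> B" "y \<in> B" using xB1 y B12 by auto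
        ultimately have "ord (restr_lp T B) x y" using g(3) by simp
        then show ?thesis by simp
      qed
    qed
  qed
  ultimately show ?thesis by blast
qed

lemma seq_assoc2:
  assumes "seq_of T U X" "seq_of U V W"
  shows "\<exists>Y. seq_of Y W X \<and> seq_of T V Y"
proof -
  obtain A B where AB: "wf_lp T" "wf_lp U" "wf_lp X" "A \<union> B = car T" "A \<inter> B = {}"
    "iso_lp (restr_lp T A) U" "iso_lp (restr_lp T B) X" "\<forall>x\<in>A. \<forall>y\<in>B. ord T x y"
    by (rule seq_ofE[OF assms(1)])
  obtain C D where CD: "wf_lp U" "wf_lp V" "wf_lp W" "C \<union> D = car U" "C \<inter> D = {}"
    "iso_lp (restr_lp U C) V" "iso_lp (restr_lp U D) W" "\<forall>x\<in>C. \<forall>y\<in>D. ord U x y"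
    by (rule seq_ofE[OF assms(2)])
  obtain g where g: "bij_betw g (car (restr_lp T A)) (car U)"
    "\<forall>x\<in>car (restr_lp T A). lab U (g x) = lab (restr_lp T A) x"
    "\<forall>x\<in>car (restr_lp T A). \<forall>y\<in>car (restr_lp T A). ord (restr_lp T A) x y \<longleftrightarrow> ord U (g x) (g y)"
    by (rule isoE[OF AB(6)])
  have gA: "\<And>x. x \<in> A \<Longrightarrow> g x \<in> car U" using g(1) bij_betwE by fastforce
  define A1 where "A1 = A \<inter> g -` C"
  define A2 where "A2 = A \<inter> g -` D"
  define Y where "Y = restr_lp T (A2 \<union> B)"
  have A12: "A1 \<union> A2 = A" unfolding A1_def A2_def using gA CD(4) by blast
  have A12d: "A1 \<inter> A2 = {}" unfolding A1_def A2_def using CD(5) by blast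
  have isoA1: "iso_lp (restr_lp T A1) V"
  proof -
    have "iso_lp (restr_lp (restr_lp T A) (car (restr_lp T A) \<inter> g -` C)) (restr_lp U C)"
      by (rule iso_restr[OF g]) (use CD(4) in blast)
    then have "iso_lp (restr_lp T A1) (restr_lp U C)" unfolding A1_def
      by (simp add: restr_restr)
    then show ?thesis using CD(6) by (rule iso_trans)
  qed
  have isoA2: "iso_lp (restr_lp T A2) W"
  proof -
    have "iso_lp (restr_lp (restr_lp T A) (car (restr_lp T A) \<inter> g -` D)) (restr_lp U D)"
      by (rule iso_restr[OF g]) (use CD(4) in blast)
    then have "iso_lp (restr_lp T A2) (restr_lp U D)" unfolding A2_def
      by (simp add: restr_restr)
    then show ?thesis using CD(7) by (rule iso_trans)
  qed
  have sub: "A2 \<union> B \<subseteq> car T" using AB(4) A12 by blast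
  have wfY: "wf_lp Y" unfolding Y_def using wf_restr[OF AB(1) sub] .
  have "seq_of Y W X"
  proof (rule seq_ofI[OF wfY CD(3) AB(3), of A2 B])
    show "A2 \<union> B = car Y" unfolding Y_def by simp
    show "A2 \<inter> B = {}" using AB(5) A12 by blast
    show "iso_lp (restr_lp Y A2) W" unfolding Y_def using isoA2 by (simp add: restr_restr)
    show "iso_lp (restr_lp Y B) X" unfolding Y_def using AB(7) by (simp add: restr_restr)
    show "\<forall>x\<in>A2. \<forall>y\<in>B. ord Y x y" unfolding Y_def using AB(8) A12 by auto
  qed
  moreover have "seq_of T V Y"
  proof (rule seq_ofI[OF AB(1) CD(2) wfY, of A1 "A2 \<union> B"])
    show "A1 \<union> (A2 \<union> B) = car T" using AB(4) A12 by blast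
    show "A1 \<inter> (A2 \<union> B) = {}" using AB(5) A12 A12d by blast
    show "iso_lp (restr_lp T A1) V" by (rule isoA1)
    show "iso_lp (restr_lp T (A2 \<union> B)) Y" unfolding Y_def by (rule iso_refl)
    show "\<forall>x\<in>A1. \<forall>y\<in>A2 \<union> B. ord T x y"
    proof (intro ballI)
      fix x y assume x: "x \<in> A1" and y: "y \<in> A2 \<union> B"
      show "ord T x y"
      proof (cases "y \<in> B")
        case True
        then show ?thesis using AB(8) x A12 by blast
      next
        case False
        then have yA2: "y \<in> A2" using y by blast
        have "g x \<in> C" "g y \<in> D" using x yA2 unfolding A1_def A2_def by auto
        then have "ord U (g x) (g y)" using CD(8) by blast
        moreover have "x \<in> A" "y \<in> A" using x yA2 A12 by auto
        ultimately have "ord (restr_lp T A) x y" using g(3) by simp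
        then show ?thesis by simp
      qed
    qed
  qed
  ultimately show ?thesis by blast
qed

lemma par_swap:
  assumes "par_of_list U [V, W]" shows "par_of_list U [W, V]"
proof (rule par_of_listE[OF assms])
  fix A assume h: "wf_lp U" "\<forall>i<length [V, W]. wf_lp ([V, W] ! i)"
    "(\<Union>i<length [V, W]. A i) = car U"
    "\<forall>i<length [V, W]. \<forall>j<length [V, W]. i \<noteq> j \<longrightarrow> A i \<inter> A j = {}"
    "\<forall>i<length [V, W]. iso_lp (restr_lp U (A i)) ([V, W] ! i)"
    "\<forall>i<length [V, W]. \<forall>j<length [V, W]. i \<noteq> j \<longrightarrow> (\<forall>x\<in>A i. \<forall>y\<in>A j. \<not> ord U x y)"
  have l2: "\<And>i::nat. i < 2 \<longleftrightarrow> i = 0 \<or> i = 1" "\<And>i::nat. i < Suc (Suc 0) \<longleftrightarrow> i = 0 \<or> i = 1" by auto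
  have u: "(\<Union>i<Suc (Suc 0). A i) = A 0 \<union> A 1" by (auto simp: l2)
  have u': "(\<Union>i<Suc (Suc 0). A (1 - i)) = A 1 \<union> A 0" by (auto simp: l2)
  show "par_of_list U [W, V]"
  proof (rule par_of_listI[of U "[W, V]" "\<lambda>i. A (1 - i)"])
    show "wf_lp U" by (rule h(1))
    show "\<forall>i<length [W, V]. wf_lp ([W, V] ! i)" using h(2) by (auto simp add: l2)
    show "(\<Union>i<length [W, V]. A (1 - i)) = car U" using h(3) u u' by (simp add: Un_commute)
    show "\<forall>i<length [W, V]. \<forall>j<length [W, V]. i \<noteq> j \<longrightarrow> A (1 - i) \<inter> A (1 - j) = {}"
      using h(4) by (simp add: l2)
    show "\<forall>i<length [W, V]. iso_lp (restr_lp U (A (1 - i))) ([W, V] ! i)"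
      using h(5) by (simp add: l2)
    show "\<forall>i<length [W, V]. \<forall>j<length [W, V]. i \<noteq> j \<longrightarrow> (\<forall>x\<in>A (1 - i). \<forall>y\<in>A (1 - j). \<not> ord U x y)"
      using h(6) by (simp add: l2)
  qed
qed



lemma lang_pow_iso: "X \<in> lang_pow L n \<Longrightarrow> wf_lp T \<Longrightarrow> iso_lp T X \<Longrightarrow> T \<in> lang_pow L n"
proof (cases n)
  case 0
  assume "X \<in> lang_pow L n" "wf_lp T" "iso_lp T X"
  then show ?thesis using 0 empty_iso by auto
next
  case (Suc m)
  assume "X \<in> lang_pow L n" "wf_lp T" "iso_lp T X"
  then show ?thesis using Suc by (simp add: seq_lang_def) (blast intro: seq_of_iso)
qed

lemma sem_iso: "X \<in> sem e \<Longrightarrow> wf_lp T \<Longrightarrow> iso_lp T X \<Longrightarrow> T \<in> sem e"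
proof (induction e arbitrary: T X)
  case One
  then show ?case using empty_iso by auto
next
  case (Sym a)
  then show ?case using prim_iso by auto
next
  case (Plus e1 e2)
  then show ?case by auto
next
  case (Seq e1 e2)
  then show ?case by (simp add: seq_lang_def) (blast intro: seq_of_iso)
next
  case (Par e1 e2)
  then show ?case by (simp add: par_lang_def par_of_def) (blast intro: par_of_list_iso)
next
  case (Star e)
  then show ?case by (simp add: kleene_def) (blast intro: lang_pow_iso)
qed simp

definition E0 :: "'a lp" where
  "E0 = \<lparr>car = {}, ord = (\<lambda>x y. False), lab = (\<lambda>x. undefined)\<rparr>"

lemma wf_E0: "wf_lp E0"
  unfolding wf_lp_def E0_def by simp

lemma empty_E0: "is_empty_pom E0"
  unfolding is_empty_pom_def using wf_E0 by (simp add: E0_def)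

lemma par_E0: "par_of E0 E0 E0"
  unfolding par_of_def
proof (rule par_of_listI[of E0 "[E0, E0]" "\<lambda>i. {}"])
  have c: "car E0 = {}" by (simp add: E0_def)
  show "\<forall>i<length [E0, E0]. iso_lp (restr_lp E0 {}) ([E0, E0] ! i)"
    by (auto intro!: iso_empty simp: c nth_Cons split: nat.split)
  show "wf_lp E0" by (rule wf_E0)
  show "\<forall>i<length [E0, E0]. wf_lp ([E0, E0] ! i)" by (auto simp: wf_E0 nth_Cons split: nat.split)
  show "(\<Union>i<length [E0, E0]. {}) = car E0" by (simp add: c)
qed auto

lemma FF_E0: "e \<in> FF \<Longrightarrow> E0 \<in> sem e"
proof (induction rule: FF.induct)
  case FF_one
  then show ?case using empty_E0 by simp
next
  case (FF_plus1 e f)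
  then show ?case by simp
next
  case (FF_plus2 f e)
  then show ?case by simp
next
  case (FF_seq e f)
  then show ?case using seq_intro_unitR[OF wf_E0 empty_E0] by (auto simp: seq_lang_def)
next
  case (FF_par e f)
  then show ?case using par_E0 by (auto simp: par_lang_def)
next
  case (FF_star e)
  have "E0 \<in> lang_pow (sem e) 0" using empty_E0 by simp
  then show ?case unfolding sem.simps kleene_def by blast
qed

lemma E0_in_sem: "e \<in> FF \<Longrightarrow> wf_lp U \<Longrightarrow> U \<in> seq_lang {U} (sem e)"
  using FF_E0 seq_intro_unitR[OF _ empty_E0] by (auto simp: seq_lang_def)

lemma seq_lang_E0L: "e \<in> FF \<Longrightarrow> wf_lp U \<Longrightarrow> U \<in> sem f \<Longrightarrow> U \<in> seq_lang (sem e) (sem f)"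
  using FF_E0 seq_intro_unitL[OF _ empty_E0] by (auto simp: seq_lang_def)

lemma delta_sound:
  "g \<in> deltaS e a \<Longrightarrow> is_prim_pom U a \<Longrightarrow> seq_lang {U} (sem g) \<subseteq> sem e"
proof (induction e arbitrary: g)
  case (Sym b)
  then have g: "g = One" "a = b" by (auto split: if_splits)
  show ?case
  proof
    fix T assume "T \<in> seq_lang {U} (sem g)"
    then obtain E where "seq_of T U E" "is_empty_pom E" using g by (auto simp: seq_lang_def)
    then have "iso_lp T U" "wf_lp T" using seq_unitR seq_of_def by blast+
    then show "T \<in> sem (Sym b)" using prim_iso Sym(2) g by auto
  qed
next
  case (Plus e1 e2)
  then show ?case by auto
next
  case (Seq e1 e2)
  show ?case
  proof
    fix T assume T: "T \<in> seq_lang {U} (sem g)"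
    show "T \<in> sem (Seq e1 e2)"
    proof (cases "g \<in> star_op e1 (deltaS e2 a)")
      case True
      then have "e1 \<in> FF" "g \<in> deltaS e2 a" unfolding star_op_def by (auto split: if_splits)
      then have "T \<in> sem e2" using Seq.IH(2) Seq.prems(2) T by blast
      moreover have "wf_lp T" using T by (auto simp: seq_lang_def seq_of_def)
      ultimately show ?thesis using seq_lang_E0L[OF \<open>e1 \<in> FF\<close>] by simp
    next
      case False
      then obtain g' where g: "g = Seq g' e2" "g' \<in> deltaS e1 a" using Seq.prems(1) by auto
      obtain Y G H where Y: "seq_of T U Y" and GH: "seq_of Y G H" "G \<in> sem g'" "H \<in> sem e2"
        using T g by (auto simp: seq_lang_def)
      obtain Z where Z: "seq_of Z U G" "seq_of T Z H" using seq_assoc1[OF Y(1) GH(1)] by blast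
      have "Z \<in> sem e1" using Seq.IH(1)[OF g(2) Seq.prems(2)] Z(1) GH(2) by (auto simp: seq_lang_def)
      then show ?thesis using Z(2) GH(3) by (auto simp: seq_lang_def)
    qed
  qed
next
  case (Star e)
  show ?case
  proof
    fix T assume T: "T \<in> seq_lang {U} (sem g)"
    obtain g' where g: "g = Seq g' (Star e)" "g' \<in> deltaS e a" using Star.prems(1) by auto
    obtain Y G H where Y: "seq_of T U Y" and GH: "seq_of Y G H" "G \<in> sem g'" "H \<in> kleene (sem e)"
      using T g by (auto simp: seq_lang_def)
    obtain Z where Z: "seq_of Z U G" "seq_of T Z H" using seq_assoc1[OF Y(1) GH(1)] by blast
    have "Z \<in> sem e" using Star.IH[OF g(2) Star.prems(2)] Z(1) GH(2) by (auto simp: seq_lang_def)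
    moreover obtain n where "H \<in> lang_pow (sem e) n" using GH(3) by (auto simp: kleene_def)
    ultimately have "T \<in> lang_pow (sem e) (Suc n)" using Z(2) by (auto simp: seq_lang_def)
    then show "T \<in> sem (Star e)" unfolding sem.simps kleene_def by blast
  qed
qed auto

lemma mset2:
  assumes "mset qs = {#e, f#}" shows "qs = [e, f] \<or> qs = [f, e]"
proof -
  have "length qs = 2" using arg_cong[OF assms, of size] by simp
  then obtain x y where qs: "qs = [x, y]"
    by (metis (no_types, lifting) One_nat_def Suc_1 length_0_conv length_Suc_conv)
  then have "add_mset x {#y#} = add_mset e {#f#}" using assms by simp
  then show ?thesis using qs by (auto simp: add_eq_conv_ex)
qed

lemma gamma_sound:
  "g \<in> gammaS e \<phi> \<Longrightarrow> \<phi> = mset qs \<Longrightarrow> length Us = length qs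
   \<Longrightarrow> (\<forall>i<length qs. Us ! i \<in> sem (qs ! i)) \<Longrightarrow> par_of_list U Us
   \<Longrightarrow> seq_lang {U} (sem g) \<subseteq> sem e"
proof (induction e arbitrary: g)
  case (Par e1 e2)
  then have g: "g = One" and qs: "mset qs = {#e1, e2#}" by (auto split: if_splits)
  have l2: "\<And>i::nat. i < Suc (Suc 0) \<longleftrightarrow> i = 0 \<or> i = 1" by auto
  have "U \<in> sem (Par e1 e2)"
  proof (cases "qs = [e1, e2]")
    case True
    then obtain V W where "Us = [V, W]" using Par.prems(3)
      by (metis (no_types, lifting) length_0_conv length_Suc_conv list.size(4))
    moreover have "V \<in> sem e1" "W \<in> sem e2" using Par.prems(4)[rule_format, of 0] Par.prems(4)[rule_format, of 1] True calculation by auto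
    ultimately show ?thesis using Par.prems(5) by (auto simp: par_lang_def par_of_def)
  next
    case False
    then have qs2: "qs = [e2, e1]" using mset2[OF qs] by blast
    then obtain V W where VW: "Us = [V, W]" using Par.prems(3)
      by (metis (no_types, lifting) length_0_conv length_Suc_conv list.size(4))
    then have "par_of_list U [W, V]" using Par.prems(5) par_swap by blast
    moreover have "W \<in> sem e1" "V \<in> sem e2" using Par.prems(4)[rule_format, of 0] Par.prems(4)[rule_format, of 1] qs2 VW by auto
    ultimately show ?thesis by (auto simp: par_lang_def par_of_def)
  qed
  show ?case
  proof
    fix T assume "T \<in> seq_lang {U} (sem g)"
    then obtain E where "seq_of T U E" "is_empty_pom E" using g by (auto simp: seq_lang_def)
    then have "iso_lp T U" "wf_lp T" using seq_unitR seq_of_def by blast+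
    then show "T \<in> sem (Par e1 e2)" using sem_iso \<open>U \<in> sem (Par e1 e2)\<close> by blast
  qed
next
  case (Plus e1 e2)
  then show ?case by auto
next
  case (Seq e1 e2)
  show ?case
  proof
    fix T assume T: "T \<in> seq_lang {U} (sem g)"
    show "T \<in> sem (Seq e1 e2)"
    proof (cases "g \<in> star_op e1 (gammaS e2 \<phi>)")
      case True
      then have "e1 \<in> FF" "g \<in> gammaS e2 \<phi>" unfolding star_op_def by (auto split: if_splits)
      then have "T \<in> sem e2" using Seq.IH(2) Seq.prems(2-5) T by blast
      moreover have "wf_lp T" using T by (auto simp: seq_lang_def seq_of_def)
      ultimately show ?thesis using seq_lang_E0L[OF \<open>e1 \<in> FF\<close>] by simp
    next
      case False
      then obtain g' where g: "g = Seq g' e2" "g' \<in> gammaS e1 \<phi>" using Seq.prems(1) by auto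
      obtain Y G H where Y: "seq_of T U Y" and GH: "seq_of Y G H" "G \<in> sem g'" "H \<in> sem e2"
        using T g by (auto simp: seq_lang_def)
      obtain Z where Z: "seq_of Z U G" "seq_of T Z H" using seq_assoc1[OF Y(1) GH(1)] by blast
      have "Z \<in> sem e1" using Seq.IH(1)[OF g(2) Seq.prems(2-5)] Z(1) GH(2) by (auto simp: seq_lang_def)
      then show ?thesis using Z(2) GH(3) by (auto simp: seq_lang_def)
    qed
  qed
next
  case (Star e)
  show ?case
  proof
    fix T assume T: "T \<in> seq_lang {U} (sem g)"
    obtain g' where g: "g = Seq g' (Star e)" "g' \<in> gammaS e \<phi>" using Star.prems(1) by auto
    obtain Y G H where Y: "seq_of T U Y" and GH: "seq_of Y G H" "G \<in> sem g'" "H \<in> kleene (sem e)"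
      using T g by (auto simp: seq_lang_def)
    obtain Z where Z: "seq_of Z U G" "seq_of T Z H" using seq_assoc1[OF Y(1) GH(1)] by blast
    have "Z \<in> sem e" using Star.IH[OF g(2) Star.prems(2-5)] Z(1) GH(2) by (auto simp: seq_lang_def)
    moreover obtain n where "H \<in> lang_pow (sem e) n" using GH(3) by (auto simp: kleene_def)
    ultimately have "T \<in> lang_pow (sem e) (Suc n)" using Z(2) by (auto simp: seq_lang_def)
    then show "T \<in> sem (Star e)" unfolding sem.simps kleene_def by blast
  qed
qed auto



lemma ex_run: "run FF deltaS gammaS e U s \<Longrightarrow> s \<in> FF \<Longrightarrow> \<exists>s. run FF deltaS gammaS e U s \<and> s \<in> FF"
  by (rule exI[of _ s]) simp

lemma run_wf: "run F \<delta> \<gamma> q U q' \<Longrightarrow> wf_lp U"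
  by (induction rule: run.induct)
     (auto simp: is_empty_pom_def is_prim_pom_def seq_of_def par_of_list_def)

lemma run_sound:
  "run FF deltaS gammaS e U e' \<Longrightarrow> seq_lang {U} (sem e') \<subseteq> sem e"
proof (induction rule: run.induct)
  case (run_one U q)
  show ?case
  proof
    fix T assume "T \<in> seq_lang {U} (sem q)"
    then obtain X where X: "seq_of T U X" "X \<in> sem q" by (auto simp: seq_lang_def)
    have "iso_lp T X" using seq_unitL[OF X(1) run_one(1)] .
    moreover have "wf_lp T" using X(1) by (auto simp: seq_of_def)
    ultimately show "T \<in> sem q" using sem_iso X(2) by blast
  qed
next
  case (run_sym U a q' q)
  show ?case by (rule delta_sound[OF run_sym(2) run_sym(1)])
next
  case (run_seq q V q'' W q' U)
  show ?case
  proof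
    fix T assume "T \<in> seq_lang {U} (sem q')"
    then obtain X where X: "seq_of T U X" "X \<in> sem q'" by (auto simp: seq_lang_def)
    obtain Y where Y: "seq_of Y W X" "seq_of T V Y" using seq_assoc2[OF X(1) run_seq(3)] by blast
    have "Y \<in> sem q''" using run_seq(5) Y(1) X(2) by (auto simp: seq_lang_def)
    then show "T \<in> sem q" using run_seq(4) Y(2) by (auto simp: seq_lang_def)
  qed
next
  case (run_par q' q qs Us U)
  have "\<forall>i<length qs. Us ! i \<in> sem (qs ! i)"
  proof (intro allI impI)
    fix i assume i: "i < length qs"
    then obtain r where r: "seq_lang {Us ! i} (sem r) \<subseteq> sem (qs ! i)" "r \<in> FF"
      using run_par.IH by blast
    have "wf_lp (Us ! i)" using run_par.hyps(2,3) i by (auto simp: par_of_list_def)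
    then show "Us ! i \<in> sem (qs ! i)" using E0_in_sem[OF r(2)] r(1) by blast
  qed
  then show ?case using gamma_sound[OF run_par.hyps(1) refl run_par.hyps(2) _ run_par.hyps(3)] by blast
qed

lemma LS_sound: "U \<in> LS e \<Longrightarrow> U \<in> sem e"
proof -
  assume "U \<in> LS e"
  then obtain e' where r: "run FF deltaS gammaS e U e'" "e' \<in> FF"
    unfolding LS_def pa_lang_def by blast
  have "U \<in> seq_lang {U} (sem e')" using E0_in_sem[OF r(2) run_wf[OF r(1)]] .
  then show ?thesis using run_sound[OF r(1)] by blast
qed

lemma run_sim:
  "run F \<delta> \<gamma> e U e' \<Longrightarrow> (\<forall>a. \<delta> e a \<subseteq> \<delta> h a) \<Longrightarrow> (\<forall>\<phi>. \<gamma> e \<phi> \<subseteq> \<gamma> h \<phi>)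
   \<Longrightarrow> run F \<delta> \<gamma> h U e' \<or> (e' = e \<and> run F \<delta> \<gamma> h U h)"
proof (induction rule: run.induct)
  case (run_one U q)
  have "run F \<delta> \<gamma> h U h" by (rule run.run_one[OF run_one(1)])
  then show ?case by simp
next
  case (run_sym U a q' q)
  then have "q' \<in> \<delta> h a" by blast
  then have "run F \<delta> \<gamma> h U q'" by (rule run.run_sym[OF run_sym.hyps(1)])
  then show ?case by simp
next
  case (run_seq q V q'' W q' U)
  from run_seq.IH(1)[OF run_seq.prems]
  show ?case
  proof
    assume "run F \<delta> \<gamma> h V q''"
    then have "run F \<delta> \<gamma> h U q'" by (rule run.run_seq[OF _ run_seq.hyps(2) run_seq.hyps(3)])
    then show ?thesis by simp
  next
    assume h: "q'' = q \<and> run F \<delta> \<gamma> h V h"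
    then have hV: "run F \<delta> \<gamma> h V h" by simp
    have "(\<forall>a. \<delta> q'' a \<subseteq> \<delta> h a)" "(\<forall>\<phi>. \<gamma> q'' \<phi> \<subseteq> \<gamma> h \<phi>)" using h run_seq.prems by simp_all
    from run_seq.IH(2)[OF this]
    show ?thesis
    proof
      assume "run F \<delta> \<gamma> h W q'"
      then have "run F \<delta> \<gamma> h U q'" by (rule run.run_seq[OF hV _ run_seq.hyps(3)])
      then show ?thesis by simp
    next
      assume h2: "q' = q'' \<and> run F \<delta> \<gamma> h W h"
      then have "run F \<delta> \<gamma> h U h" using run.run_seq[OF hV _ run_seq.hyps(3)] by simp
      then show ?thesis using h h2 by simp
    qed
  qed
next
  case (run_par q' q qs Us U)
  then have g: "q' \<in> \<gamma> h (mset qs)" by blast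
  have "\<forall>i<length qs. \<exists>r. run F \<delta> \<gamma> (qs ! i) (Us ! i) r \<and> r \<in> F" using run_par.IH by blast
  then have "run F \<delta> \<gamma> h U q'" by (rule run.run_par[where F=F and \<delta>=\<delta> and \<gamma>=\<gamma>, OF g run_par.hyps(2) _ run_par.hyps(3)])
  then show ?case by simp
qed

lemma run_seq_left:
  "run FF deltaS gammaS e V e1 \<Longrightarrow> run FF deltaS gammaS (Seq e f) V (Seq e1 f)"
proof (induction rule: run.induct)
  case (run_one U q)
  then show ?case by (rule run.run_one)
next
  case (run_sym U a q' q)
  then have "Seq q' f \<in> deltaS (Seq q f) a" by auto
  then show ?case by (rule run.run_sym[OF run_sym.hyps(1)])
next
  case (run_seq q V q'' W q' U)
  show ?case by (rule run.run_seq[OF run_seq.IH(1) run_seq.IH(2) run_seq.hyps(3)])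
next
  case (run_par q' q qs Us U)
  have g: "Seq q' f \<in> gammaS (Seq q f) (mset qs)" using run_par.hyps(1) by auto
  have "\<forall>i<length qs. \<exists>r. run FF deltaS gammaS (qs ! i) (Us ! i) r \<and> r \<in> FF" using run_par.IH by blast
  then show ?case by (rule run.run_par[where F=FF and \<delta>=deltaS and \<gamma>=gammaS, OF g run_par.hyps(2) _ run_par.hyps(3)])
qed

lemma run_seq_right:
  assumes "e1 \<in> FF" "run FF deltaS gammaS f W f1"
  shows "run FF deltaS gammaS (Seq e1 f) W f1 \<or> (f1 = f \<and> run FF deltaS gammaS (Seq e1 f) W (Seq e1 f))"
  using run_sim[OF assms(2)] assms(1) by (auto simp: star_op_def)

lemma run_star:
  "run FF deltaS gammaS x V e1 \<Longrightarrow> x = e \<Longrightarrow>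
   run FF deltaS gammaS (Star e) V (Seq e1 (Star e)) \<or> (e1 = e \<and> run FF deltaS gammaS (Star e) V (Star e))"
proof (induction rule: run.induct)
  case (run_one U q)
  have "run FF deltaS gammaS (Star e) U (Star e)" by (rule run.run_one[OF run_one(1)])
  then show ?case using run_one(2) by simp
next
  case (run_sym U a q' q)
  then have "Seq q' (Star e) \<in> deltaS (Star e) a" by auto
  then have "run FF deltaS gammaS (Star e) U (Seq q' (Star e))" by (rule run.run_sym[OF run_sym.hyps(1)])
  then show ?case by simp
next
  case (run_seq q V q'' W q' U)
  from run_seq.IH(1)[OF run_seq.prems]
  show ?case
  proof
    assume "run FF deltaS gammaS (Star e) V (Seq q'' (Star e))"
    moreover have "run FF deltaS gammaS (Seq q'' (Star e)) W (Seq q' (Star e))"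
      using run_seq_left[OF run_seq.hyps(2)] .
    ultimately have "run FF deltaS gammaS (Star e) U (Seq q' (Star e))" by (rule run.run_seq[OF _ _ run_seq.hyps(3)])
    then show ?thesis by simp
  next
    assume h: "q'' = e \<and> run FF deltaS gammaS (Star e) V (Star e)"
    then have hV: "run FF deltaS gammaS (Star e) V (Star e)" by simp
    from run_seq.IH(2) h
    have "run FF deltaS gammaS (Star e) W (Seq q' (Star e)) \<or> q' = e \<and> run FF deltaS gammaS (Star e) W (Star e)"
      by simp
    then show ?thesis
    proof
      assume "run FF deltaS gammaS (Star e) W (Seq q' (Star e))"
      then have "run FF deltaS gammaS (Star e) U (Seq q' (Star e))" by (rule run.run_seq[OF hV _ run_seq.hyps(3)])
      then show ?thesis by simp
    next
      assume h2: "q' = e \<and> run FF deltaS gammaS (Star e) W (Star e)"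
      then have "run FF deltaS gammaS (Star e) U (Star e)" using run.run_seq[OF hV _ run_seq.hyps(3)] by simp
      then show ?thesis using h2 by simp
    qed
  qed
next
  case (run_par q' q qs Us U)
  have g: "Seq q' (Star e) \<in> gammaS (Star e) (mset qs)" using run_par.hyps(1) run_par.prems by auto
  have "\<forall>i<length qs. \<exists>r. run FF deltaS gammaS (qs ! i) (Us ! i) r \<and> r \<in> FF" using run_par.IH by blast
  then have "run FF deltaS gammaS (Star e) U (Seq q' (Star e))" by (rule run.run_par[where F=FF and \<delta>=deltaS and \<gamma>=gammaS, OF g run_par.hyps(2) _ run_par.hyps(3)])
  then show ?case by simp
qed

lemma lang_pow_complete:
  assumes IH: "\<And>V. V \<in> sem e \<Longrightarrow> \<exists>e1. run FF deltaS gammaS e V e1 \<and> e1 \<in> FF"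
  shows "U \<in> lang_pow (sem e) n \<Longrightarrow> \<exists>s. run FF deltaS gammaS (Star e) U s \<and> s \<in> FF"
proof (induction n arbitrary: U)
  case 0
  then have "is_empty_pom U" by simp
  then show ?case by (rule ex_run[OF run.run_one FF.FF_star])
next
  case (Suc n)
  then obtain V W where VW: "V \<in> sem e" "W \<in> lang_pow (sem e) n" "seq_of U V W"
    by (auto simp: seq_lang_def)
  obtain e1 where e1: "run FF deltaS gammaS e V e1" "e1 \<in> FF" using IH VW(1) by blast
  obtain s where s: "run FF deltaS gammaS (Star e) W s" "s \<in> FF" using Suc.IH VW(2) by blast
  from run_star[OF e1(1) refl]
  show ?case
  proof
    assume a: "run FF deltaS gammaS (Star e) V (Seq e1 (Star e))"
    from run_seq_right[OF e1(2) s(1)] show ?thesis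
    proof
      assume "run FF deltaS gammaS (Seq e1 (Star e)) W s"
      then show ?thesis by (rule ex_run[OF run.run_seq[OF a _ VW(3)] s(2)])
    next
      assume "s = Star e \<and> run FF deltaS gammaS (Seq e1 (Star e)) W (Seq e1 (Star e))"
      then have h: "run FF deltaS gammaS (Seq e1 (Star e)) W (Seq e1 (Star e))" by (rule conjunct2)
      have "Seq e1 (Star e) \<in> FF" by (rule FF.FF_seq[OF e1(2) FF.FF_star])
      then show ?thesis by (rule ex_run[OF run.run_seq[OF a h VW(3)]])
    qed
  next
    assume "e1 = e \<and> run FF deltaS gammaS (Star e) V (Star e)"
    then have h: "run FF deltaS gammaS (Star e) V (Star e)" by (rule conjunct2)
    show ?thesis by (rule ex_run[OF run.run_seq[OF h s(1) VW(3)] s(2)])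
  qed
qed

lemma LS_complete: "U \<in> sem e \<Longrightarrow> \<exists>e'. run FF deltaS gammaS e U e' \<and> e' \<in> FF"
proof (induction e arbitrary: U)
  case Zero
  then show ?case by simp
next
  case One
  then have "is_empty_pom U" by simp
  then show ?case by (rule ex_run[OF run.run_one FF.FF_one])
next
  case (Sym a)
  then have p: "is_prim_pom U a" by simp
  have "One \<in> deltaS (Sym a) a" by simp
  then have "run FF deltaS gammaS (Sym a) U One" by (rule run.run_sym[OF p])
  then show ?case by (rule ex_run[OF _ FF.FF_one])
next
  case (Plus e1 e2)
  show ?case
  proof (cases "U \<in> sem e1")
    case True
    then obtain r where r: "run FF deltaS gammaS e1 U r" "r \<in> FF" using Plus.IH(1) by blast
    from run_sim[OF r(1), of "Plus e1 e2"] have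
      "run FF deltaS gammaS (Plus e1 e2) U r \<or> r = e1 \<and> run FF deltaS gammaS (Plus e1 e2) U (Plus e1 e2)"
      by auto
    then show ?thesis
    proof
      assume "run FF deltaS gammaS (Plus e1 e2) U r" then show ?thesis by (rule ex_run[OF _ r(2)])
    next
      assume h: "r = e1 \<and> run FF deltaS gammaS (Plus e1 e2) U (Plus e1 e2)"
      then have "e1 \<in> FF" using r(2) by simp
      then have "Plus e1 e2 \<in> FF" by (rule FF.FF_plus1)
      then show ?thesis by (rule ex_run[OF conjunct2[OF h]])
    qed
  next
    case False
    then have "U \<in> sem e2" using Plus.prems by simp
    then obtain r where r: "run FF deltaS gammaS e2 U r" "r \<in> FF" using Plus.IH(2) by blast
    from run_sim[OF r(1), of "Plus e1 e2"] have
      "run FF deltaS gammaS (Plus e1 e2) U r \<or> r = e2 \<and> run FF deltaS gammaS (Plus e1 e2) U (Plus e1 e2)"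
      by auto
    then show ?thesis
    proof
      assume "run FF deltaS gammaS (Plus e1 e2) U r" then show ?thesis by (rule ex_run[OF _ r(2)])
    next
      assume h: "r = e2 \<and> run FF deltaS gammaS (Plus e1 e2) U (Plus e1 e2)"
      then have "e2 \<in> FF" using r(2) by simp
      then have "Plus e1 e2 \<in> FF" by (rule FF.FF_plus2)
      then show ?thesis by (rule ex_run[OF conjunct2[OF h]])
    qed
  qed
next
  case (Seq e f)
  then obtain V W where VW: "V \<in> sem e" "W \<in> sem f" "seq_of U V W" by (auto simp: seq_lang_def)
  obtain e1 where e1: "run FF deltaS gammaS e V e1" "e1 \<in> FF" using Seq.IH(1) VW(1) by blast
  obtain f1 where f1: "run FF deltaS gammaS f W f1" "f1 \<in> FF" using Seq.IH(2) VW(2) by blast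
  have a: "run FF deltaS gammaS (Seq e f) V (Seq e1 f)" using run_seq_left[OF e1(1)] .
  from run_seq_right[OF e1(2) f1(1)] show ?case
  proof
    assume "run FF deltaS gammaS (Seq e1 f) W f1"
    then show ?thesis by (rule ex_run[OF run.run_seq[OF a _ VW(3)] f1(2)])
  next
    assume h0: "f1 = f \<and> run FF deltaS gammaS (Seq e1 f) W (Seq e1 f)"
    then have h: "run FF deltaS gammaS (Seq e1 f) W (Seq e1 f)" by (rule conjunct2)
    have "f \<in> FF" using h0 f1(2) by simp
    then have "Seq e1 f \<in> FF" by (rule FF.FF_seq[OF e1(2)])
    then show ?thesis by (rule ex_run[OF run.run_seq[OF a h VW(3)]])
  qed
next
  case (Par e f)
  then obtain V W where VW: "V \<in> sem e" "W \<in> sem f" "par_of_list U [V, W]"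
    by (auto simp: par_lang_def par_of_def)
  obtain e1 where e1: "run FF deltaS gammaS e V e1" "e1 \<in> FF" using Par.IH(1) VW(1) by blast
  obtain f1 where f1: "run FF deltaS gammaS f W f1" "f1 \<in> FF" using Par.IH(2) VW(2) by blast
  have l2: "\<And>i::nat. i < Suc (Suc 0) \<longleftrightarrow> i = 0 \<or> i = 1" by auto
  have "\<forall>i<length [e, f]. \<exists>r. run FF deltaS gammaS ([e, f] ! i) ([V, W] ! i) r \<and> r \<in> FF"
    using e1 f1 by (auto simp: l2)
  moreover have "One \<in> gammaS (Par e f) (mset [e, f])" by simp
  moreover have "length [V, W] = length [e, f]" by simp
  ultimately have "run FF deltaS gammaS (Par e f) U One"
    by (intro run.run_par[where F=FF and \<delta>=deltaS and \<gamma>=gammaS, OF _ _ _ VW(3)])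
  then show ?case by (rule ex_run[OF _ FF.FF_one])
next
  case (Star e)
  then obtain n where "U \<in> lang_pow (sem e) n" by (auto simp: kleene_def)
  then show ?case using lang_pow_complete[OF Star.IH] by blast
qed

theorem lemma7p13:
  fixes e :: "'a::finite srexp"
  shows "LS e = sem e"
proof
  show "LS e \<subseteq> sem e" using LS_sound by blast
  show "sem e \<subseteq> LS e" using LS_complete unfolding LS_def pa_lang_def by blast
qed


end
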